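(* Let $\zeta:\mathbb{R}\to\mathbb{R}$ be continuous and assume either (i) $\zeta$ is not a polynomial, or (ii) $\zeta$ is not affine and there exists $t\in\mathbb{R}$ at which $\zeta$ is continuously differentiable with $\zeta'(t)\neq 0$. Let $N, D$ be positive integers with $N\ge 2$, let $\mathcal{G}$ be the complete graph on $N$ nodes, let $\mathbf{W}\in\mathbb{R}^{D\times D}$, let $\tilde{\mathbf{A}} = \big(\mathbb{1}_{i\sim j \vee i=j}/\sqrt{\deg(v_i)\deg(v_j)}\big)_{i,j=1}^N$ and $\mathcal{L}^{\mathrm{conv}}_{\mathcal{G},\mathbf{W}}(\mathbf{X}) = \tilde{\mathbf{A}}\mathbf{X}\mathbf{W}$. Then the class of maps $f:\mathbb{R}^{N\times D}\to\mathbb{R}$ of the form $f = \mathrm{MLP}\circ\mathcal{L}^{\mathrm{conv}}_{\mathcal{G},\mathbf{W}}$, where $\mathrm{MLP}:\mathbb{R}^{N\times D}\to\mathbb{R}$ ranges over multilayer perceptrons with activation function $\zeta$, is not dense in $\mathcal{C}(\mathbb{R}^{N\times D},\mathbb{R})$ for the topology of uniform convergence on compact sets.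
   Context: $i\sim j$ means $v_i$ and $v_j$ are adjacent; degrees count the self-loop, so that for the complete graph every entry of $\tilde{\mathbf{A}}$ equals $1/N$. MLPs take the matrix input (viewed as a vector in $\mathbb{R}^{ND}$) to a real number. *)

theory Defs
  imports "HOL-Analysis.Analysis" "HOL-Computational_Algebra.Polynomial"
begin

text \<open>Hidden units of an MLP with activation zeta on inputs X in R^(N x D)
  (X $ i $ j = entry in row i, column j).\<close>
inductive mlp_unit :: "(real \<Rightarrow> real) \<Rightarrow> nat \<Rightarrow> (real^'d::finite^'n::finite \<Rightarrow> real) \<Rightarrow> bool"
  for \<zeta> :: "real \<Rightarrow> real" where
  coord: "mlp_unit \<zeta> 0 (\<lambda>X. X $ i $ j)"
| layer: "(\<forall>k<(m::nat). mlp_unit \<zeta> l (h k :: real^'d^'n \<Rightarrow> real)) \<Longrightarrow>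
          mlp_unit \<zeta> (Suc l) (\<lambda>X. \<zeta> (b + (\<Sum>k<m. w k * h k X :: real)))"

definition mlp :: "(real \<Rightarrow> real) \<Rightarrow> (real^'d::finite^'n::finite \<Rightarrow> real) \<Rightarrow> bool" where
  "mlp \<zeta> f \<longleftrightarrow> (\<exists>l (m::nat) h w b. (\<forall>k<m. mlp_unit \<zeta> l (h k)) \<and>
                      f = (\<lambda>X. b + (\<Sum>k<m. w k * h k X :: real)))"

definition gdeg :: "('n::finite \<Rightarrow> 'n \<Rightarrow> bool) \<Rightarrow> 'n \<Rightarrow> real" where
  "gdeg E i = real (card {j. E i j \<or> i = j})"

definition norm_adj :: "('n::finite \<Rightarrow> 'n \<Rightarrow> bool) \<Rightarrow> real^'n^'n" where
  "norm_adj E = (\<chi> i j. (if E i j \<or> i = j then 1 else 0) / sqrt (gdeg E i * gdeg E j))"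

definition complete_graph :: "'n \<Rightarrow> 'n \<Rightarrow> bool" where
  "complete_graph i j \<longleftrightarrow> i \<noteq> j"

definition conv_layer :: "('n::finite \<Rightarrow> 'n \<Rightarrow> bool) \<Rightarrow> real^'d^'d \<Rightarrow> real^'d^'n \<Rightarrow> real^'d^'n" where
  "conv_layer E W X = norm_adj E ** X ** W"

definition is_polynomial_fun :: "(real \<Rightarrow> real) \<Rightarrow> bool" where
  "is_polynomial_fun g \<longleftrightarrow> (\<exists>p :: real poly. \<forall>x. g x = poly p x)"

definition is_affine_fun :: "(real \<Rightarrow> real) \<Rightarrow> bool" where
  "is_affine_fun g \<longleftrightarrow> (\<exists>a b. \<forall>x. g x = a * x + b)"

definition C1_at :: "(real \<Rightarrow> real) \<Rightarrow> real \<Rightarrow> bool" where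
  "C1_at g t \<longleftrightarrow> (\<exists>e>0. \<forall>x\<in>ball t e. g differentiable at x) \<and> isCont (deriv g) t"

end

theory Submission
  imports Defs
begin

theorem lemma2:
  fixes \<zeta> :: "real \<Rightarrow> real" and W :: "real^'d::finite^'d"
  assumes "continuous_on UNIV \<zeta>"
    and "\<not> is_polynomial_fun \<zeta> \<or>
         (\<not> is_affine_fun \<zeta> \<and> (\<exists>t. C1_at \<zeta> t \<and> deriv \<zeta> t \<noteq> 0))"
    and "CARD('n::finite) \<ge> 2"
  shows "\<not> (\<forall>g :: real^'d^'n \<Rightarrow> real. continuous_on UNIV g \<longrightarrow>
             (\<forall>K. compact K \<longrightarrow> (\<forall>\<epsilon>>0. \<exists>f. mlp \<zeta> f \<and>
                (\<forall>X\<in>K. \<bar>f (conv_layer complete_graph W X) - g X\<bar> < \<epsilon>))))"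
proof
  assume H: "\<forall>g :: real^'d^'n \<Rightarrow> real. continuous_on UNIV g \<longrightarrow>
             (\<forall>K. compact K \<longrightarrow> (\<forall>\<epsilon>>0. \<exists>f. mlp \<zeta> f \<and>
                (\<forall>X\<in>K. \<bar>f (conv_layer complete_graph W X) - g X\<bar> < \<epsilon>)))"
  obtain a b :: 'n where ab: "a \<noteq> b"
  proof -
    have "\<not> (\<forall>x y::'n. x = y)"
    proof
      assume "\<forall>x y::'n. x = y"
      then have "(UNIV::'n set) = {undefined}" by auto
      then have "CARD('n) = 1" by (metis card.empty card_insert_disjoint empty_iff finite.emptyI One_nat_def)
      with assms(3) show False by simp
    qed
    then show ?thesis using that by blast
  qed
  define j0 :: 'd where "j0 = undefined"
  define X2 :: "real^'d^'n" where "X2 = (\<chi> k j. (if k = a then 1 else 0) - (if k = b then 1 else 0))"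
  define c where "c = 1 / sqrt (real CARD('n) * real CARD('n))"
  have deg: "gdeg complete_graph i = real CARD('n)" for i :: 'n
  proof -
    have "{j. i \<noteq> j \<or> i = j} = (UNIV::'n set)" by auto
    then show ?thesis unfolding gdeg_def complete_graph_def by simp
  qed
  have A: "norm_adj complete_graph $ i $ k = c" for i k :: 'n
    unfolding norm_adj_def c_def deg by (simp add: complete_graph_def)
  have "norm_adj complete_graph ** X2 = 0"
  proof -
    have "(norm_adj complete_graph ** X2) $ i $ j = 0" for i j
    proof -
      have "(norm_adj complete_graph ** X2) $ i $ j = (\<Sum>k\<in>UNIV. c * X2 $ k $ j)"
        by (simp add: matrix_matrix_mult_def A)
      also have "\<dots> = c * ((\<Sum>k\<in>UNIV. (if k = a then 1 else 0)) - (\<Sum>k\<in>UNIV. (if k = b then 1 else 0)))"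
        by (simp add: X2_def sum_distrib_left[symmetric] sum_subtractf)
      also have "\<dots> = 0" by simp
      finally show ?thesis .
    qed
    then show ?thesis by (simp add: vec_eq_iff)
  qed
  moreover have "norm_adj complete_graph ** (0::real^'d^'n) = 0"
    by (simp add: vec_eq_iff matrix_matrix_mult_def)
  ultimately have eq: "conv_layer complete_graph W X2 = conv_layer complete_graph W 0"
    unfolding conv_layer_def by simp
  have cont: "continuous_on UNIV (\<lambda>X::real^'d^'n. X $ a $ j0)"
    by (intro continuous_intros)
  have cpt: "compact {X2, 0::real^'d^'n}" by simp
  from H cont cpt obtain f where f: "\<forall>X\<in>{X2, 0}. \<bar>f (conv_layer complete_graph W X) - X $ a $ j0\<bar> < 1/2"
    by (metis (no_types, lifting) half_gt_zero zero_less_one)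
  have "X2 $ a $ j0 = 1" using ab by (simp add: X2_def)
  with f eq show False by auto
qed

end
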